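(* Let $N\ge1$, $H=(H_1,\dots,H_N)\in]0,1[^N$, $a\in\mathbb{R}^N\setminus\{(0,\dots,0)\}$, let $S^H$ be the mixed sub-fractional Brownian motion with parameters $N,a,H$, and for real $x\ge0$ and integer $n\ge0$ let $C(x,n)=\mathrm{Cov}\big(S^H_{x+1}-S^H_x,\,S^H_{x+n+1}-S^H_{x+n}\big)$. Then: (1) for all integers $p\ge0$ and $n\ge1$, $$C(p,n)=\sum_{i=1}^N\frac{a_i^2}{2}\Big[(n+1)^{2H_i}-2n^{2H_i}+(n-1)^{2H_i}-(2p+n+2)^{2H_i}+2(2p+n+1)^{2H_i}-(2p+n)^{2H_i}\Big];$$ (2) for every integer $p\ge0$, as $n\to\infty$, $$C(p,n)=\sum_{i=1}^N\Big[2(1-H_i)H_i(2H_i-1)(2p+1)a_i^2\,n^{2H_i-3}+o(n^{2H_i-3})\Big];$$ (3) for every integer $p\ge0$, $\sum_{n\ge0}C(p,n)<\infty$ (the series converges).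
   Context: Let $(\Omega,\mathcal F,\mathbb P)$ be a probability space. For $K\in]0,1[$, a fractional Brownian motion on $\mathbb{R}$ with Hurst index $K$ is a continuous centered Gaussian process $\{B^K(t),t\in\mathbb{R}\}$ with $\mathrm{Cov}(B^K(t),B^K(s))=\frac12(|t|^{2K}+|s|^{2K}-|t-s|^{2K})$. The sub-fractional Brownian motion (sfBm) of index $K$ is $\xi^K_t=(B^K_t+B^K_{-t})/\sqrt2$, $t\ge0$; it is a continuous centered Gaussian process with $\mathrm{Cov}(\xi^K_t,\xi^K_s)=s^{2K}+t^{2K}-\frac12\big((s+t)^{2K}+|t-s|^{2K}\big)$. For $N\ge1$, $H\in]0,1[^N$, $a\in\mathbb{R}^N\setminus\{0\}$, the mixed sub-fractional Brownian motion (msfBm) is $S^H_t=\sum_{i=1}^N a_i\xi^{H_i}(t)$, $t\ge0$, where $\xi^{H_1},\dots,\xi^{H_N}$ are independent sfBms with indices $H_1,\dots,H_N$. *)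

theory Defs
  imports "HOL-Probability.Probability" "HOL-Library.Landau_Symbols"
begin

definition cov :: "'a measure \<Rightarrow> ('a \<Rightarrow> real) \<Rightarrow> ('a \<Rightarrow> real) \<Rightarrow> real" where
  "cov M X Y = (\<integral>\<omega>. X \<omega> * Y \<omega> \<partial>M) - (\<integral>\<omega>. X \<omega> \<partial>M) * (\<integral>\<omega>. Y \<omega> \<partial>M)"

definition gaussian_rv :: "'a measure \<Rightarrow> ('a \<Rightarrow> real) \<Rightarrow> bool" where
  "gaussian_rv M X \<longleftrightarrow> X \<in> borel_measurable M \<and>
     ((\<exists>\<mu> \<sigma>. \<sigma> > 0 \<and> distributed M lborel X (\<lambda>x. ennreal (normal_density \<mu> \<sigma> x)))
      \<or> (\<exists>c. AE \<omega> in M. X \<omega> = c))"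

definition gaussian_process :: "'a measure \<Rightarrow> (real \<Rightarrow> 'a \<Rightarrow> real) \<Rightarrow> real set \<Rightarrow> bool" where
  "gaussian_process M X T \<longleftrightarrow>
     (\<forall>F c. finite F \<longrightarrow> F \<subseteq> T \<longrightarrow> gaussian_rv M (\<lambda>\<omega>. \<Sum>t\<in>F. c t * X t \<omega>))"

definition fBm :: "'a measure \<Rightarrow> real \<Rightarrow> (real \<Rightarrow> 'a \<Rightarrow> real) \<Rightarrow> bool" where
  "fBm M K B \<longleftrightarrow>
     (\<forall>t. B t \<in> borel_measurable M) \<and>
     gaussian_process M B UNIV \<and>
     (\<forall>\<omega> \<in> space M. continuous_on UNIV (\<lambda>t. B t \<omega>)) \<and>
     (\<forall>t. integrable M (\<lambda>\<omega>. (B t \<omega>)\<^sup>2)) \<and>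
     (\<forall>t. (\<integral>\<omega>. B t \<omega> \<partial>M) = 0) \<and>
     (\<forall>t s. cov M (B t) (B s) = (\<bar>t\<bar> powr (2*K) + \<bar>s\<bar> powr (2*K) - \<bar>t - s\<bar> powr (2*K)) / 2)"

definition sfBm :: "'a measure \<Rightarrow> real \<Rightarrow> (real \<Rightarrow> 'a \<Rightarrow> real) \<Rightarrow> bool" where
  "sfBm M K \<xi> \<longleftrightarrow>
     (\<exists>B. fBm M K B \<and> (\<forall>t\<ge>0. \<forall>\<omega>\<in>space M. \<xi> t \<omega> = (B t \<omega> + B (-t) \<omega>) / sqrt 2))"

definition msfBm :: "'a measure \<Rightarrow> nat \<Rightarrow> (nat \<Rightarrow> real) \<Rightarrow> (nat \<Rightarrow> real)
    \<Rightarrow> (real \<Rightarrow> 'a \<Rightarrow> real) \<Rightarrow> bool" where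
  "msfBm M N a H S \<longleftrightarrow>
     (\<exists>\<xi> :: nat \<Rightarrow> real \<Rightarrow> 'a \<Rightarrow> real.
        (\<forall>i<N. sfBm M (H i) (\<xi> i)) \<and>
        prob_space.indep_vars M (\<lambda>_. Pi\<^sub>M {0..} (\<lambda>_. borel))
            (\<lambda>i \<omega>. restrict (\<lambda>t. \<xi> i t \<omega>) {0..}) {..<N} \<and>
        (\<forall>t\<ge>0. \<forall>\<omega>\<in>space M. S t \<omega> = (\<Sum>i<N. a i * \<xi> i t \<omega>)))"

definition incr_cov :: "'a measure \<Rightarrow> (real \<Rightarrow> 'a \<Rightarrow> real) \<Rightarrow> real \<Rightarrow> nat \<Rightarrow> real" where
  "incr_cov M S x n = cov M (\<lambda>\<omega>. S (x + 1) \<omega> - S x \<omega>)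
                          (\<lambda>\<omega>. S (x + real n + 1) \<omega> - S (x + real n) \<omega>)"

end

theory Submission
  imports Defs "HOL-Real_Asymp.Real_Asymp"
begin

definition pl :: "real \<Rightarrow> real \<Rightarrow> real" where
 "pl a y = 1 + a*y + a*(a-1)/2*y^2 + a*(a-1)*(a-2)/6*y^3"
lemma pl_id: "pl a (1*x) + pl a ((-1)*x) - pl a ((c+2)*x) + 2 * pl a ((c+1)*x) - pl a (c*x) - 2
   = -(c+1)*a*(a-1)*(a-2) * x^3"
  unfolding pl_def by (simp add: field_simps power2_eq_square power3_eq_cube)

definition Tay :: "real \<Rightarrow> real \<Rightarrow> real" where
  "Tay a y = (1+y) powr a - pl a y"

lemma Tay_lim: "((\<lambda>y. Tay a y / y^3) \<longlongrightarrow> 0) (at 0)"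
  unfolding Tay_def pl_def by real_asymp

lemma Tay_lim_b: "((\<lambda>x. Tay a (b*x) / x^3) \<longlongrightarrow> 0) (at 0)"
proof (cases "b = 0")
  case True
  then show ?thesis by (simp add: Tay_def pl_def)
next
  case False
  have fl: "filterlim (\<lambda>x. b*x) (at 0) (at (0::real))"
  proof (rule filterlim_atI)
    show "((\<lambda>x. b*x) \<longlongrightarrow> 0) (at (0::real))"
      by (auto intro!: tendsto_eq_intros)
    show "\<forall>\<^sub>F x in at 0. b * x \<noteq> 0"
      using False by (auto simp: eventually_at_filter)
  qed
  have "((\<lambda>x. Tay a (b*x) / (b*x)^3) \<longlongrightarrow> 0) (at 0)"
    using filterlim_compose[OF Tay_lim fl] by simp
  then have "((\<lambda>x. b^3 * (Tay a (b*x) / (b*x)^3)) \<longlongrightarrow> 0) (at 0)"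
    by (rule tendsto_mult_right_zero)
  moreover have "\<forall>\<^sub>F x in at 0. b^3 * (Tay a (b*x) / (b*x)^3) = Tay a (b*x) / x^3"
    using False by (auto simp: eventually_at_filter power_mult_distrib)
  ultimately show ?thesis by (rule Lim_transform_eventually)
qed

definition Fx :: "real \<Rightarrow> real \<Rightarrow> real \<Rightarrow> real" where
  "Fx a c x = (1+x) powr a - 2 + (1 - x) powr a - (1+(c+2)*x) powr a + 2*(1+(c+1)*x) powr a - (1 + c*x) powr a"

lemma Fx_id: "Fx a c x = -(c+1)*a*(a-1)*(a-2) * x^3 + Tay a (1*x) + Tay a ((-1)*x)
   - Tay a ((c+2)*x) + 2 * Tay a ((c+1)*x) - Tay a (c*x)"
  using pl_id[of a x c] unfolding Fx_def Tay_def by simp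

lemma Fx_lim: "((\<lambda>x. Fx a c x / x^3) \<longlongrightarrow> -(c+1)*a*(a-1)*(a-2)) (at 0)"
proof -
  let ?L = "-(c+1)*a*(a-1)*(a-2)"
  have "((\<lambda>x. ?L + Tay a (1*x)/x^3 + Tay a ((-1)*x)/x^3
   - Tay a ((c+2)*x)/x^3 + 2 * (Tay a ((c+1)*x)/x^3) - Tay a (c*x)/x^3) \<longlongrightarrow> ?L + 0 + 0 - 0 + 2*0 - 0) (at 0)"
    by (intro tendsto_intros Tay_lim_b)
  moreover have "\<forall>\<^sub>F x in at 0. ?L + Tay a (1*x)/x^3 + Tay a ((-1)*x)/x^3
   - Tay a ((c+2)*x)/x^3 + 2 * (Tay a ((c+1)*x)/x^3) - Tay a (c*x)/x^3 = Fx a c x / x^3"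
    by (auto simp: eventually_at_filter Fx_id field_simps)
  ultimately show ?thesis by (auto intro: Lim_transform_eventually)
qed

definition fn :: "real \<Rightarrow> real \<Rightarrow> real \<Rightarrow> real" where
  "fn a c x = (x + 1) powr a - 2 * x powr a + (x - 1) powr a
     - (c + x + 2) powr a + 2 * (c + x + 1) powr a - (c + x) powr a"

lemma powr_shift: "(x::real) > 0 \<Longrightarrow> x + b \<ge> 0 \<Longrightarrow> (x + b) powr a = x powr a * (1 + b*(1/x)) powr a"
proof -
  assume x: "x > 0" "x + b \<ge> 0"
  have "x + b = x * (1 + b*(1/x))" using x by (simp add: field_simps)
  moreover have "1 + b*(1/x) \<ge> 0" using x by (simp add: field_simps)
  ultimately show ?thesis using x by (simp add: powr_mult)
qed

lemma fn_eq: "x \<ge> 1 \<Longrightarrow> c \<ge> 0 \<Longrightarrow> fn a c x / x powr (a-3) = Fx a c (1/x) / (1/x)^3"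
proof -
  assume x: "x \<ge> 1" "c \<ge> 0"
  have e1: "(x + 1) powr a = x powr a * (1 + 1/x) powr a" using powr_shift[of x 1 a] x by simp
  have e2: "(x - 1) powr a = x powr a * (1 - 1/x) powr a" using powr_shift[of x "-1" a] x by simp
  have e3: "(c + x + 2) powr a = x powr a * (1 + (c+2)*(1/x)) powr a"
    using powr_shift[of x "c+2" a] x by (simp add: algebra_simps)
  have e4: "(c + x + 1) powr a = x powr a * (1 + (c+1)*(1/x)) powr a"
    using powr_shift[of x "c+1" a] x by (simp add: algebra_simps)
  have e5: "(c + x) powr a = x powr a * (1 + c*(1/x)) powr a"
    using powr_shift[of x "c" a] x by (simp add: algebra_simps)
  have "fn a c x = x powr a * Fx a c (1/x)"
    unfolding fn_def Fx_def e1 e2 e3 e4 e5 by (simp add: algebra_simps)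
  moreover have "x powr (a-3) = x powr a / x^3" using x by (simp add: powr_diff powr_realpow)
  moreover have "x powr a > 0" using x by simp
  ultimately show ?thesis using x by (simp add: field_simps)
qed

lemma fn_lim: assumes "c \<ge> 0"
  shows "((\<lambda>n::nat. fn a c (real n) / real n powr (a-3)) \<longlongrightarrow> -(c+1)*a*(a-1)*(a-2)) sequentially"
proof -
  have fl: "filterlim (\<lambda>n::nat. 1 / real n) (at 0) sequentially"
  proof (rule filterlim_atI)
    show "((\<lambda>n::nat. 1 / real n) \<longlongrightarrow> 0) sequentially" by (rule lim_const_over_n)
    show "\<forall>\<^sub>F n in sequentially. 1 / real n \<noteq> 0"
      by (auto simp: eventually_sequentially intro!: exI[of _ 1])
  qed
  have "((\<lambda>n::nat. Fx a c (1/real n) / (1/real n)^3) \<longlongrightarrow> -(c+1)*a*(a-1)*(a-2)) sequentially"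
    using filterlim_compose[OF Fx_lim fl] by simp
  moreover have "\<forall>\<^sub>F n in sequentially. Fx a c (1/real n) / (1/real n)^3 = fn a c (real n) / real n powr (a-3)"
    using assms by (auto simp: eventually_sequentially fn_eq intro!: exI[of _ 1])
  ultimately show ?thesis by (rule Lim_transform_eventually)
qed

definition L2 :: "'a measure \<Rightarrow> ('a \<Rightarrow> real) \<Rightarrow> bool" where
  "L2 M f \<longleftrightarrow> f \<in> borel_measurable M \<and> integrable M (\<lambda>x. (f x)^2)"

lemma L2_integrable: assumes "prob_space M" "L2 M f" shows "integrable M f"
proof -
  interpret prob_space M by fact
  have "f \<in> borel_measurable M" "integrable M (\<lambda>x. (f x)^2)" using assms(2) unfolding L2_def by auto
  then show ?thesis by (rule square_integrable_imp_integrable)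
qed
lemma L2_mult: assumes "L2 M f" "L2 M g" shows "integrable M (\<lambda>x. f x * g x)"
proof -
  have mf: "f \<in> borel_measurable M" and mg: "g \<in> borel_measurable M"
    and if2: "integrable M (\<lambda>x. (f x)^2)" and ig2: "integrable M (\<lambda>x. (g x)^2)"
    using assms unfolding L2_def by auto
  have i: "integrable M (\<lambda>x. (f x)^2 + (g x)^2)" using if2 ig2 by (rule Bochner_Integration.integrable_add)
  have m: "(\<lambda>x. f x * g x) \<in> borel_measurable M" using mf mg by (rule borel_measurable_times)
  have b: "\<And>x. norm (f x * g x) \<le> norm ((f x)^2 + (g x)^2)"
  proof -
    fix x
    have "0 \<le> (\<bar>f x\<bar> - \<bar>g x\<bar>)^2" by simp
    then have "2 * \<bar>f x * g x\<bar> \<le> (f x)^2 + (g x)^2"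
      by (simp add: power2_diff abs_mult power2_abs)
    then show "norm (f x * g x) \<le> norm ((f x)^2 + (g x)^2)" by simp
  qed
  show ?thesis by (rule Bochner_Integration.integrable_bound[OF i m], rule AE_I2, rule b)
qed

lemma L2_add: assumes "L2 M f" "L2 M g" shows "L2 M (\<lambda>x. f x + g x)"
proof -
  have "integrable M (\<lambda>x. (f x)^2 + 2 * (f x * g x) + (g x)^2)"
    using assms L2_mult[OF assms] unfolding L2_def by auto
  moreover have "(\<lambda>x. f x + g x) \<in> borel_measurable M" using assms unfolding L2_def by auto
  ultimately show ?thesis unfolding L2_def by (simp add: power2_sum algebra_simps)
qed

lemma L2_cmult: assumes "L2 M f" shows "L2 M (\<lambda>x. c * f x)"
proof -
  have "integrable M (\<lambda>x. c^2 * (f x)^2)" using assms unfolding L2_def by auto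
  moreover have "(\<lambda>x. c * f x) \<in> borel_measurable M" using assms unfolding L2_def by auto
  ultimately show ?thesis unfolding L2_def by (simp add: power_mult_distrib)
qed

lemma L2_diff: assumes "L2 M f" "L2 M g" shows "L2 M (\<lambda>x. f x - g x)"
  using L2_add[OF assms(1) L2_cmult[OF assms(2), of "-1"]] by simp

lemma L2_sum: "finite I \<Longrightarrow> (\<And>i. i \<in> I \<Longrightarrow> L2 M (f i)) \<Longrightarrow> L2 M (\<lambda>x. \<Sum>i\<in>I. f i x)"
proof (induction I rule: finite_induct)
  case empty then show ?case by (simp add: L2_def)
next
  case (insert j I) then show ?case by (simp add: L2_add)
qed

lemma L2_cong: assumes "L2 M f" "\<And>x. x \<in> space M \<Longrightarrow> f x = g x" shows "L2 M g"
proof -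
  have "g \<in> borel_measurable M" using assms measurable_cong[of M f g] unfolding L2_def by auto
  moreover have "integrable M (\<lambda>x. (g x)^2)"
    using assms Bochner_Integration.integrable_cong[of M M "\<lambda>x. (f x)^2" "\<lambda>x. (g x)^2"] unfolding L2_def by auto
  ultimately show ?thesis unfolding L2_def by auto
qed

lemma int_prod4: assumes "L2 M A" "L2 M B" "L2 M C" "L2 M D"
  shows "(\<integral>x. (A x - B x) * (C x - D x) \<partial>M) =
    (\<integral>x. A x * C x \<partial>M) - (\<integral>x. A x * D x \<partial>M) - (\<integral>x. B x * C x \<partial>M) + (\<integral>x. B x * D x \<partial>M)"
proof -
  have "(\<integral>x. (A x - B x) * (C x - D x) \<partial>M) = (\<integral>x. A x * C x - A x * D x - B x * C x + B x * D x \<partial>M)"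
    by (rule Bochner_Integration.integral_cong[OF refl]) (simp add: algebra_simps)
  also have "\<dots> = (\<integral>x. A x * C x \<partial>M) - (\<integral>x. A x * D x \<partial>M) - (\<integral>x. B x * C x \<partial>M) + (\<integral>x. B x * D x \<partial>M)"
  proof -
    have i: "integrable M (\<lambda>x. A x * C x)" "integrable M (\<lambda>x. A x * D x)"
      "integrable M (\<lambda>x. B x * C x)" "integrable M (\<lambda>x. B x * D x)"
      using L2_mult assms by auto
    have "(\<integral>x. A x * C x - A x * D x - B x * C x + B x * D x \<partial>M) =
       (\<integral>x. A x * C x - A x * D x - B x * C x \<partial>M) + (\<integral>x. B x * D x \<partial>M)"
      using i by (intro Bochner_Integration.integral_add Bochner_Integration.integrable_diff)
    also have "(\<integral>x. A x * C x - A x * D x - B x * C x \<partial>M) =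
       (\<integral>x. A x * C x - A x * D x \<partial>M) - (\<integral>x. B x * C x \<partial>M)"
      using i by (intro Bochner_Integration.integral_diff Bochner_Integration.integrable_diff)
    also have "(\<integral>x. A x * C x - A x * D x \<partial>M) =
       (\<integral>x. A x * C x \<partial>M) - (\<integral>x. A x * D x \<partial>M)"
      using i by (intro Bochner_Integration.integral_diff)
    finally show ?thesis .
  qed
  finally show ?thesis .
qed

lemma fBm_props:
  assumes "prob_space M" "fBm M K B"
  shows "L2 M (B t)" "(\<integral>\<omega>. B t \<omega> \<partial>M) = 0"
    "(\<integral>\<omega>. B t \<omega> * B s \<omega> \<partial>M) = (\<bar>t\<bar> powr (2*K) + \<bar>s\<bar> powr (2*K) - \<bar>t - s\<bar> powr (2*K)) / 2"
proof -
  note F = assms(2)[unfolded fBm_def]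
  have m: "\<forall>t. B t \<in> borel_measurable M" using F by (elim conjE) assumption
  have i: "\<forall>t. integrable M (\<lambda>\<omega>. (B t \<omega>)\<^sup>2)" using F by (elim conjE) assumption
  have z: "\<forall>t. (\<integral>\<omega>. B t \<omega> \<partial>M) = 0" using F by (elim conjE) assumption
  have c: "\<forall>t s. cov M (B t) (B s) = (\<bar>t\<bar> powr (2*K) + \<bar>s\<bar> powr (2*K) - \<bar>t - s\<bar> powr (2*K)) / 2"
    using F by (elim conjE) assumption
  show "L2 M (B t)" using m i unfolding L2_def by blast
  show "(\<integral>\<omega>. B t \<omega> \<partial>M) = 0" using z by blast
  show "(\<integral>\<omega>. B t \<omega> * B s \<omega> \<partial>M) = (\<bar>t\<bar> powr (2*K) + \<bar>s\<bar> powr (2*K) - \<bar>t - s\<bar> powr (2*K)) / 2"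
    using c[rule_format, of t s] z unfolding cov_def by simp
qed

lemma int_prod4p: assumes "L2 M A" "L2 M B" "L2 M C" "L2 M D"
  shows "(\<integral>x. (A x + B x) * (C x + D x) \<partial>M) =
    (\<integral>x. A x * C x \<partial>M) + (\<integral>x. A x * D x \<partial>M) + (\<integral>x. B x * C x \<partial>M) + (\<integral>x. B x * D x \<partial>M)"
proof -
  have "(\<integral>x. (A x + B x) * (C x + D x) \<partial>M) = (\<integral>x. (A x - (-1 * B x)) * (C x - (-1 * D x)) \<partial>M)"
    by simp
  also have "\<dots> = (\<integral>x. A x * C x \<partial>M) - (\<integral>x. A x * (-1 * D x) \<partial>M) - (\<integral>x. (-1 * B x) * C x \<partial>M) + (\<integral>x. (-1 * B x) * (-1 * D x) \<partial>M)"
    by (rule int_prod4[OF assms(1) L2_cmult[OF assms(2)] assms(3) L2_cmult[OF assms(4)]])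
  also have "\<dots> = (\<integral>x. A x * C x \<partial>M) + (\<integral>x. A x * D x \<partial>M) + (\<integral>x. B x * C x \<partial>M) + (\<integral>x. B x * D x \<partial>M)"
    by simp
  finally show ?thesis .
qed

definition Rc :: "real \<Rightarrow> real \<Rightarrow> real \<Rightarrow> real" where
  "Rc K t s = t powr (2*K) + s powr (2*K) - ((t+s) powr (2*K) + \<bar>t-s\<bar> powr (2*K)) / 2"

lemma sfBm_props:
  assumes P: "prob_space M" and S: "sfBm M K \<xi>" and t: "t \<ge> 0" and s: "s \<ge> 0"
  shows "L2 M (\<xi> t)" "(\<integral>\<omega>. \<xi> t \<omega> \<partial>M) = 0" "(\<integral>\<omega>. \<xi> t \<omega> * \<xi> s \<omega> \<partial>M) = Rc K t s"
proof -
  obtain B where fB: "fBm M K B" and eq: "\<forall>t\<ge>0. \<forall>\<omega>\<in>space M. \<xi> t \<omega> = (B t \<omega> + B (-t) \<omega>) / sqrt 2"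
    using S unfolding sfBm_def by blast
  note fp = fBm_props[OF P fB]
  have L: "L2 M (\<xi> r)" if r: "r \<ge> 0" for r
  proof (rule L2_cong)
    show "L2 M (\<lambda>\<omega>. 1 / sqrt 2 * (B r \<omega> + B (-r) \<omega>))"
      by (intro L2_cmult L2_add fp)
    show "\<And>\<omega>. \<omega> \<in> space M \<Longrightarrow> 1 / sqrt 2 * (B r \<omega> + B (-r) \<omega>) = \<xi> r \<omega>"
      using eq r by simp
  qed
  show "L2 M (\<xi> t)" using L t .
  have "(\<integral>\<omega>. \<xi> t \<omega> \<partial>M) = (\<integral>\<omega>. 1 / sqrt 2 * (B t \<omega> + B (-t) \<omega>) \<partial>M)"
    using eq t by (intro Bochner_Integration.integral_cong) auto
  also have "\<dots> = 1 / sqrt 2 * ((\<integral>\<omega>. B t \<omega> \<partial>M) + (\<integral>\<omega>. B (-t) \<omega> \<partial>M))"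
    using L2_integrable[OF P fp(1)] by (simp add: Bochner_Integration.integral_add)
  also have "\<dots> = 0" using fp(2) by simp
  finally show "(\<integral>\<omega>. \<xi> t \<omega> \<partial>M) = 0" .
  have "(\<integral>\<omega>. \<xi> t \<omega> * \<xi> s \<omega> \<partial>M) = (\<integral>\<omega>. 1/2 * ((B t \<omega> + B (-t) \<omega>) * (B s \<omega> + B (-s) \<omega>)) \<partial>M)"
  proof (intro Bochner_Integration.integral_cong refl)
    fix \<omega> assume "\<omega> \<in> space M"
    then have "\<xi> t \<omega> * \<xi> s \<omega> = (B t \<omega> + B (-t) \<omega>) / sqrt 2 * ((B s \<omega> + B (-s) \<omega>) / sqrt 2)"
      using eq t s by simp
    also have "\<dots> = 1/2 * ((B t \<omega> + B (-t) \<omega>) * (B s \<omega> + B (-s) \<omega>))"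
      by (simp add: field_simps)
    finally show "\<xi> t \<omega> * \<xi> s \<omega> = 1/2 * ((B t \<omega> + B (-t) \<omega>) * (B s \<omega> + B (-s) \<omega>))" .
  qed
  also have "\<dots> = 1/2 * (\<integral>\<omega>. (B t \<omega> + B (-t) \<omega>) * (B s \<omega> + B (-s) \<omega>) \<partial>M)"
    by simp
  also have "\<dots> = 1/2 * ((\<integral>x. B t x * B s x \<partial>M) + (\<integral>x. B t x * B (-s) x \<partial>M) + (\<integral>x. B (-t) x * B s x \<partial>M) + (\<integral>x. B (-t) x * B (-s) x \<partial>M))"
    by (subst int_prod4p) (auto intro: fp)
  also have "\<dots> = Rc K t s"
    using t s unfolding fp(3) Rc_def by (simp add: abs_minus_commute field_simps)
  finally show "(\<integral>\<omega>. \<xi> t \<omega> * \<xi> s \<omega> \<partial>M) = Rc K t s" .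
qed

lemma indep_int:
  fixes \<xi> :: "nat \<Rightarrow> real \<Rightarrow> 'a \<Rightarrow> real"
  assumes P: "prob_space M"
    and ind: "prob_space.indep_vars M (\<lambda>_. Pi\<^sub>M {0..} (\<lambda>_. borel))
            (\<lambda>i \<omega>. restrict (\<lambda>t. \<xi> i t \<omega>) {0..}) {..<N}"
    and ij: "i < N" "j < N" "i \<noteq> j"
    and uv: "u \<ge> 0" "v \<ge> 0" "u' \<ge> 0" "v' \<ge> 0"
    and ii: "integrable M (\<lambda>\<omega>. \<xi> i u \<omega> - \<xi> i v \<omega>)"
    and ij2: "integrable M (\<lambda>\<omega>. \<xi> j u' \<omega> - \<xi> j v' \<omega>)"
  shows "(\<integral>\<omega>. (\<xi> i u \<omega> - \<xi> i v \<omega>) * (\<xi> j u' \<omega> - \<xi> j v' \<omega>) \<partial>M)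
     = (\<integral>\<omega>. \<xi> i u \<omega> - \<xi> i v \<omega> \<partial>M) * (\<integral>\<omega>. \<xi> j u' \<omega> - \<xi> j v' \<omega> \<partial>M)"
proof -
  interpret prob_space M by (rule P)
  define Y where "Y k = (\<lambda>f::real\<Rightarrow>real. if k = i then f u - f v else f u' - f v')" for k
  have Ym: "Y k \<in> borel_measurable (Pi\<^sub>M {0..} (\<lambda>_. borel))" for k
  proof -
    have "(\<lambda>f::real\<Rightarrow>real. f w) \<in> borel_measurable (Pi\<^sub>M {0..} (\<lambda>_. borel))" if "w \<ge> 0" for w
      using measurable_component_singleton[of w "{0..}" "\<lambda>_. borel"] that by simp
    then show ?thesis unfolding Y_def using uv by (auto intro!: borel_measurable_diff)
  qed
  define X where "X k \<omega> = Y k (restrict (\<lambda>t. \<xi> k t \<omega>) {0..})" for k \<omega>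
  have "indep_vars (\<lambda>_. borel) X {..<N}"
    unfolding X_def by (rule indep_vars_compose2[OF ind Ym])
  then have I2: "indep_vars (\<lambda>_. borel) X {i, j}"
    by (rule indep_vars_subset) (use ij in auto)
  have Xi: "X i = (\<lambda>\<omega>. \<xi> i u \<omega> - \<xi> i v \<omega>)" using uv by (auto simp: X_def Y_def)
  have Xj: "X j = (\<lambda>\<omega>. \<xi> j u' \<omega> - \<xi> j v' \<omega>)" using uv ij by (auto simp: X_def Y_def)
  have "(\<integral>\<omega>. (\<Prod>k\<in>{i,j}. X k \<omega>) \<partial>M) = (\<Prod>k\<in>{i,j}. \<integral>\<omega>. X k \<omega> \<partial>M)"
    by (rule indep_vars_lebesgue_integral) (use I2 Xi Xj ii ij2 in auto)
  then show ?thesis using ij(3) by (simp add: Xi Xj)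
qed

lemma msfBm_cov:
  assumes P: "prob_space M" and ms: "msfBm M N a H S" and x: "x \<ge> 0"
  shows "incr_cov M S x n = (\<Sum>i<N. (a i)^2 * (Rc (H i) (x+1) (x + real n + 1) - Rc (H i) (x+1) (x + real n)
           - Rc (H i) x (x + real n + 1) + Rc (H i) x (x + real n)))"
proof -
  obtain \<xi> :: "nat \<Rightarrow> real \<Rightarrow> 'a \<Rightarrow> real" where sf: "\<forall>i<N. sfBm M (H i) (\<xi> i)"
    and ind: "prob_space.indep_vars M (\<lambda>_. Pi\<^sub>M {0..} (\<lambda>_. borel))
            (\<lambda>i \<omega>. restrict (\<lambda>t. \<xi> i t \<omega>) {0..}) {..<N}"
    and eqS: "\<forall>t\<ge>0. \<forall>\<omega>\<in>space M. S t \<omega> = (\<Sum>i<N. a i * \<xi> i t \<omega>)"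
    using ms unfolding msfBm_def by blast
  define u1 where "u1 = x + 1"
  define v1 where "v1 = x"
  define u2 where "u2 = x + real n + 1"
  define v2 where "v2 = x + real n"
  have pos: "u1 \<ge> 0" "v1 \<ge> 0" "u2 \<ge> 0" "v2 \<ge> 0" using x by (auto simp: u1_def v1_def u2_def v2_def)
  define D where "D i \<omega> = \<xi> i u1 \<omega> - \<xi> i v1 \<omega>" for i \<omega>
  define E where "E i \<omega> = \<xi> i u2 \<omega> - \<xi> i v2 \<omega>" for i \<omega>
  note sp = sfBm_props[OF P]
  have Lxi: "L2 M (\<xi> i t)" if "i < N" "t \<ge> 0" for i t using sp(1)[OF sf[rule_format, OF that(1)] that(2) that(2)] .
  have LD: "L2 M (D i)" if "i < N" for i
    unfolding D_def by (intro L2_diff Lxi that pos)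
  have LE: "L2 M (E i)" if "i < N" for i
    unfolding E_def by (intro L2_diff Lxi that pos)
  have mD: "(\<integral>\<omega>. D i \<omega> \<partial>M) = 0" if "i < N" for i
    unfolding D_def using sp(2)[OF sf[rule_format, OF that]] pos L2_integrable[OF P Lxi[OF that]]
    by (simp add: Bochner_Integration.integral_diff)
  have mE: "(\<integral>\<omega>. E i \<omega> \<partial>M) = 0" if "i < N" for i
    unfolding E_def using sp(2)[OF sf[rule_format, OF that]] pos L2_integrable[OF P Lxi[OF that]]
    by (simp add: Bochner_Integration.integral_diff)
  define Q where "Q i = Rc (H i) u1 u2 - Rc (H i) u1 v2 - Rc (H i) v1 u2 + Rc (H i) v1 v2" for i
  have DE: "(\<integral>\<omega>. D i \<omega> * E j \<omega> \<partial>M) = (if i = j then Q i else 0)" if "i < N" "j < N" for i j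
  proof (cases "i = j")
    case True
    have "(\<integral>\<omega>. D i \<omega> * E i \<omega> \<partial>M) = Q i"
      unfolding D_def E_def Q_def
      by (subst int_prod4) (use Lxi that pos sp(3)[OF sf[rule_format, OF that(1)]] in auto)
    then show ?thesis using True by simp
  next
    case False
    have "(\<integral>\<omega>. D i \<omega> * E j \<omega> \<partial>M) = (\<integral>\<omega>. D i \<omega> \<partial>M) * (\<integral>\<omega>. E j \<omega> \<partial>M)"
      unfolding D_def E_def
      using L2_integrable[OF P LD[OF that(1)]] L2_integrable[OF P LE[OF that(2)]]
      unfolding D_def E_def by (rule indep_int[OF P ind that False pos])
    then show ?thesis using False mD mE that by simp
  qed
  have S1: "S u1 \<omega> - S v1 \<omega> = (\<Sum>i<N. a i * D i \<omega>)" if "\<omega> \<in> space M" for \<omega>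
    using eqS pos that by (simp add: D_def sum_subtractf[symmetric] right_diff_distrib)
  have S2: "S u2 \<omega> - S v2 \<omega> = (\<Sum>i<N. a i * E i \<omega>)" if "\<omega> \<in> space M" for \<omega>
    using eqS pos that by (simp add: E_def sum_subtractf[symmetric] right_diff_distrib)
  have int1: "(\<integral>\<omega>. S u1 \<omega> - S v1 \<omega> \<partial>M) = 0"
  proof -
    have "(\<integral>\<omega>. S u1 \<omega> - S v1 \<omega> \<partial>M) = (\<integral>\<omega>. (\<Sum>i<N. a i * D i \<omega>) \<partial>M)"
      using S1 by (intro Bochner_Integration.integral_cong) auto
    also have "\<dots> = (\<Sum>i<N. a i * (\<integral>\<omega>. D i \<omega> \<partial>M))"
      using L2_integrable[OF P LD] by (simp add: Bochner_Integration.integral_sum)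
    also have "\<dots> = 0" using mD by simp
    finally show ?thesis .
  qed
  have int2: "(\<integral>\<omega>. (S u1 \<omega> - S v1 \<omega>) * (S u2 \<omega> - S v2 \<omega>) \<partial>M) = (\<Sum>i<N. (a i)^2 * Q i)"
  proof -
    have "(\<integral>\<omega>. (S u1 \<omega> - S v1 \<omega>) * (S u2 \<omega> - S v2 \<omega>) \<partial>M)
        = (\<integral>\<omega>. (\<Sum>i<N. \<Sum>j<N. a i * a j * (D i \<omega> * E j \<omega>)) \<partial>M)"
      using S1 S2 by (intro Bochner_Integration.integral_cong) (auto simp: sum_product algebra_simps)
    also have "\<dots> = (\<Sum>i<N. \<Sum>j<N. a i * a j * (\<integral>\<omega>. D i \<omega> * E j \<omega> \<partial>M))"
    proof -
      have ii: "integrable M (\<lambda>\<omega>. a i * a j * (D i \<omega> * E j \<omega>))" if "i \<in> {..<N}" "j \<in> {..<N}" for i j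
        using L2_mult[OF LD LE] that by auto
      have "(\<integral>\<omega>. (\<Sum>i<N. \<Sum>j<N. a i * a j * (D i \<omega> * E j \<omega>)) \<partial>M)
          = (\<Sum>i<N. (\<integral>\<omega>. (\<Sum>j<N. a i * a j * (D i \<omega> * E j \<omega>)) \<partial>M))"
        using ii by (intro Bochner_Integration.integral_sum Bochner_Integration.integrable_sum) auto
      also have "\<dots> = (\<Sum>i<N. \<Sum>j<N. (\<integral>\<omega>. a i * a j * (D i \<omega> * E j \<omega>) \<partial>M))"
        using ii by (intro sum.cong refl Bochner_Integration.integral_sum) auto
      also have "\<dots> = (\<Sum>i<N. \<Sum>j<N. a i * a j * (\<integral>\<omega>. D i \<omega> * E j \<omega> \<partial>M))"
        by simp
      finally show ?thesis .
    qed
    also have "\<dots> = (\<Sum>i<N. \<Sum>j<N. a i * a j * (if i = j then Q i else 0))"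
      using DE by simp
    also have "\<dots> = (\<Sum>i<N. (a i)^2 * Q i)"
      by (simp add: power2_eq_square if_distrib cong: if_cong)
    finally show ?thesis .
  qed
  have "incr_cov M S x n = (\<integral>\<omega>. (S u1 \<omega> - S v1 \<omega>) * (S u2 \<omega> - S v2 \<omega>) \<partial>M)
     - (\<integral>\<omega>. S u1 \<omega> - S v1 \<omega> \<partial>M) * (\<integral>\<omega>. S u2 \<omega> - S v2 \<omega> \<partial>M)"
    unfolding incr_cov_def cov_def u1_def v1_def u2_def v2_def ..
  then show ?thesis unfolding int1 int2 by (simp add: Q_def u1_def v1_def u2_def v2_def)
qed


lemma Q_formula:
  fixes x K :: real and n :: nat
  assumes x: "x \<ge> 0" and n: "n \<ge> 1"
  shows "Rc K (x+1) (x + real n + 1) - Rc K (x+1) (x + real n) - Rc K x (x + real n + 1) + Rc K x (x + real n)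
    = 1/2 * fn (2*K) (2*x) (real n)"
proof -
  have e1: "x + 1 + (x + real n + 1) = 2*x + real n + 2" by simp
  have e2: "\<bar>x + 1 - (x + real n + 1)\<bar> = real n" by simp
  have e3: "x + 1 + (x + real n) = 2*x + real n + 1" by simp
  have e4: "\<bar>x + 1 - (x + real n)\<bar> = real n - 1" using n by simp
  have e5: "x + (x + real n + 1) = 2*x + real n + 1" by simp
  have e6: "\<bar>x - (x + real n + 1)\<bar> = real n + 1" by simp
  have e7: "x + (x + real n) = 2*x + real n" by simp
  have e8: "\<bar>x - (x + real n)\<bar> = real n" by simp
  show ?thesis unfolding Rc_def e1 e2 e3 e4 e5 e6 e7 e8 fn_def by (simp add: field_simps)
qed

theorem lemma9:
  fixes M :: "'a measure" and N :: nat and H a :: "nat \<Rightarrow> real"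
    and S :: "real \<Rightarrow> 'a \<Rightarrow> real"
  assumes "prob_space M"
    and "N \<ge> 1"
    and "\<forall>i<N. 0 < H i \<and> H i < 1"
    and "\<exists>i<N. a i \<noteq> 0"
    and "msfBm M N a H S"
  shows
    "(\<forall>p::nat. \<forall>n::nat. n \<ge> 1 \<longrightarrow>
        incr_cov M S (real p) n =
          (\<Sum>i<N. (a i)\<^sup>2 / 2 *
             ((real n + 1) powr (2 * H i) - 2 * real n powr (2 * H i) + (real n - 1) powr (2 * H i)
              - (2 * real p + real n + 2) powr (2 * H i) + 2 * (2 * real p + real n + 1) powr (2 * H i)
              - (2 * real p + real n) powr (2 * H i))))
     \<and> (\<forall>p::nat. \<exists>r :: nat \<Rightarrow> nat \<Rightarrow> real.
          (\<forall>i<N. r i \<in> o[sequentially](\<lambda>n. real n powr (2 * H i - 3))) \<and>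
          (\<forall>n. incr_cov M S (real p) n =
             (\<Sum>i<N. 2 * (1 - H i) * H i * (2 * H i - 1) * (2 * real p + 1) * (a i)\<^sup>2
                        * real n powr (2 * H i - 3) + r i n)))
     \<and> (\<forall>p::nat. summable (\<lambda>n. incr_cov M S (real p) n))"
  proof -
  have P: "prob_space M" using assms(1) .
  have part1': "incr_cov M S (real p) n = (\<Sum>i<N. (a i)\<^sup>2 / 2 * fn (2 * H i) (2 * real p) (real n))"
    if "n \<ge> 1" for p n :: nat
    unfolding msfBm_cov[OF P assms(5), of "real p" n, simplified]
    by (intro sum.cong refl, subst Q_formula) (use that in auto)
  show ?thesis
  proof (intro conjI allI impI)
    fix p n :: nat assume "n \<ge> 1"
    then show "incr_cov M S (real p) n =
          (\<Sum>i<N. (a i)\<^sup>2 / 2 *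
             ((real n + 1) powr (2 * H i) - 2 * real n powr (2 * H i) + (real n - 1) powr (2 * H i)
              - (2 * real p + real n + 2) powr (2 * H i) + 2 * (2 * real p + real n + 1) powr (2 * H i)
              - (2 * real p + real n) powr (2 * H i)))"
      using part1' unfolding fn_def by simp
  next
    fix p :: nat
    define C0 where "C0 = incr_cov M S (real p) 0"
    define K where "K i = 2 * (1 - H i) * H i * (2 * H i - 1) * (2 * real p + 1) * (a i)\<^sup>2" for i
    define r where "r i n = (if n = 0 then (if i = 0 then C0 else 0)
        else (a i)\<^sup>2 / 2 * fn (2 * H i) (2 * real p) (real n) - K i * real n powr (2 * H i - 3))" for i n
    show "\<exists>r :: nat \<Rightarrow> nat \<Rightarrow> real.
          (\<forall>i<N. r i \<in> o[sequentially](\<lambda>n. real n powr (2 * H i - 3))) \<and>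
          (\<forall>n. incr_cov M S (real p) n =
             (\<Sum>i<N. 2 * (1 - H i) * H i * (2 * H i - 1) * (2 * real p + 1) * (a i)\<^sup>2
                        * real n powr (2 * H i - 3) + r i n))"
    proof (intro exI conjI allI impI)
      fix i assume i: "i < N"
      let ?g = "\<lambda>n::nat. real n powr (2 * H i - 3)"
      have lim: "((\<lambda>n. fn (2 * H i) (2 * real p) (real n) / ?g n) \<longlongrightarrow>
           -(2 * real p+1)*(2 * H i)*(2 * H i-1)*(2 * H i-2)) sequentially"
        using fn_lim[of "2 * real p" "2 * H i"] by simp
      have "((\<lambda>n. (a i)\<^sup>2 / 2 * (fn (2 * H i) (2 * real p) (real n) / ?g n) - K i) \<longlongrightarrow>
           (a i)\<^sup>2 / 2 * (-(2 * real p+1)*(2 * H i)*(2 * H i-1)*(2 * H i-2)) - K i) sequentially"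
        by (intro tendsto_intros lim)
      moreover have "(a i)\<^sup>2 / 2 * (-(2 * real p+1)*(2 * H i)*(2 * H i-1)*(2 * H i-2)) - K i = 0"
        unfolding K_def by (simp add: algebra_simps)
      ultimately have l0: "((\<lambda>n. (a i)\<^sup>2 / 2 * (fn (2 * H i) (2 * real p) (real n) / ?g n) - K i) \<longlongrightarrow> 0) sequentially"
        by simp
      have ev: "\<forall>\<^sub>F n in sequentially. (a i)\<^sup>2 / 2 * (fn (2 * H i) (2 * real p) (real n) / ?g n) - K i = r i n / ?g n"
        unfolding eventually_sequentially
        by (rule exI[of _ 1]) (auto simp: r_def field_simps)
      show "r i \<in> o[sequentially](\<lambda>n. real n powr (2 * H i - 3))"
      proof (rule smalloI_tendsto)
        show "((\<lambda>n. r i n / ?g n) \<longlongrightarrow> 0) sequentially"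
          using l0 ev by (rule Lim_transform_eventually)
        show "\<forall>\<^sub>F n in sequentially. ?g n \<noteq> 0"
          unfolding eventually_sequentially by (rule exI[of _ 1]) auto
      qed
    next
      fix n :: nat
      show "incr_cov M S (real p) n =
             (\<Sum>i<N. 2 * (1 - H i) * H i * (2 * H i - 1) * (2 * real p + 1) * (a i)\<^sup>2
                        * real n powr (2 * H i - 3) + r i n)"
      proof (cases "n = 0")
        case True
        have "(\<Sum>i<N. 2 * (1 - H i) * H i * (2 * H i - 1) * (2 * real p + 1) * (a i)\<^sup>2
                        * real n powr (2 * H i - 3) + r i n) = (\<Sum>i<N. if i = 0 then C0 else 0)"
          using True by (simp add: r_def)
        also have "\<dots> = C0" using assms(2) by (simp add: sum.delta)
        finally show ?thesis using True C0_def by simp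
      next
        case False
        then have "(\<Sum>i<N. 2 * (1 - H i) * H i * (2 * H i - 1) * (2 * real p + 1) * (a i)\<^sup>2
                        * real n powr (2 * H i - 3) + r i n) = (\<Sum>i<N. (a i)\<^sup>2 / 2 * fn (2 * H i) (2 * real p) (real n))"
          by (intro sum.cong refl) (simp add: r_def K_def)
        then show ?thesis using part1'[of n p] False by simp
      qed
    qed
  next
    fix p :: nat
    have sm: "summable (\<lambda>n. (a i)\<^sup>2 / 2 * fn (2 * H i) (2 * real p) (real n))" if i: "i < N" for i
    proof (rule summable_comparison_test_bigo)
      let ?g = "\<lambda>n::nat. real n powr (2 * H i - 3)"
      show "summable (\<lambda>n. norm (?g n))"
        using assms(3) i by (simp add: summable_real_powr_iff)
      have lim: "((\<lambda>n. fn (2 * H i) (2 * real p) (real n) / ?g n) \<longlongrightarrow>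
           -(2 * real p+1)*(2 * H i)*(2 * H i-1)*(2 * H i-2)) sequentially"
        using fn_lim[of "2 * real p" "2 * H i"] by simp
      have "((\<lambda>n. (a i)\<^sup>2 / 2 * fn (2 * H i) (2 * real p) (real n) / ?g n) \<longlongrightarrow>
           (a i)\<^sup>2 / 2 * (-(2 * real p+1)*(2 * H i)*(2 * H i-1)*(2 * H i-2))) sequentially"
        using tendsto_mult_left[OF lim, of "(a i)\<^sup>2 / 2"] by (simp add: mult.assoc)
      moreover have "\<forall>\<^sub>F n in sequentially. ?g n \<noteq> 0"
        unfolding eventually_sequentially by (rule exI[of _ 1]) auto
      ultimately show "(\<lambda>n. (a i)\<^sup>2 / 2 * fn (2 * H i) (2 * real p) (real n)) \<in> O(?g)"
        by (rule bigoI_tendsto)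
    qed
    have "summable (\<lambda>n. \<Sum>i<N. (a i)\<^sup>2 / 2 * fn (2 * H i) (2 * real p) (real n))"
      by (rule summable_sum) (use sm in auto)
    moreover have "\<forall>\<^sub>F n in sequentially. incr_cov M S (real p) n = (\<Sum>i<N. (a i)\<^sup>2 / 2 * fn (2 * H i) (2 * real p) (real n))"
      unfolding eventually_sequentially by (rule exI[of _ 1]) (blast intro: part1')
    ultimately show "summable (\<lambda>n. incr_cov M S (real p) n)"
      using summable_cong[of "\<lambda>n. incr_cov M S (real p) n"] by simp
  qed
qed

end
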